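(* Let $\mathbf A$ be a semisimple Pavelka algebra and $O\colon A\to A$ a closure operator. The following are equivalent: (i) $\mathbf r\cdot O(x)\le O(\mathbf r\cdot x)$ for all $x\in A$ and all constants $\mathbf r$; (ii) there exist a set $G$ and a fuzzy relation $I\colon\mathrm{Spec_M}\mathbf A\times G\to[0,1]$ (a fuzzy formal context $(\mathrm{Spec_M}\mathbf A,G,I)$) such that $n_{\mathbf A}(O(x))=h_I(d_I(n_{\mathbf A}(x)))$ for all $x\in A$.
   Context: An MV-algebra $(A;\oplus,\neg,0)$ carries derived operations $1=\neg0$, $x\cdot y=\neg(\neg x\oplus\neg y)$, $x\rightarrow y=\neg x\oplus y$, order $x\le y$ iff $\neg x\oplus y=1$. The standard MV-algebra is $[0,1]$ with $x\oplus y=\min\{x+y,1\}$, $\neg x=1-x$ (so $x\cdot y=\max\{0,x+y-1\}$, $x\rightarrow y=\min\{1,1-x+y\}$). A Pavelka algebra is $\mathbf A=(A;\oplus,\neg,\{\mathbf r\mid r\in[0,1]\cap\mathbb Q\})$ with $(A;\oplus,\neg,\mathbf 0)$ an MV-algebra, $\mathbf r\oplus\mathbf s=\mathbf t$ whenever $\min\{r+s,1\}=t$, $\neg\mathbf r=\mathbf s$ whenever $1-r=s$. Filters are filters of the MV-reduct; $\mathrm{Spec_M}\mathbf A$ is the set of maximal proper filters; for $F\in\mathrm{Spec_M}\mathbf A$, $\mathbf A/F$ embeds uniquely into $[0,1]$ and $x/F$ is identified with its image in $[0,1]$. Semisimple: MV-reduct is a subdirect product of simple MV-algebras. Natural embedding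 $n_{\mathbf A}\colon A\to[0,1]^{\mathrm{Spec_M}\mathbf A}$, $n_{\mathbf A}(x)(F)=x/F$. A closure operator is a monotone $O$ with $x\le O(x)$, $O(O(x))=O(x)$. For $I\colon M\times G\to[0,1]$ (with $M=\mathrm{Spec_M}\mathbf A$): $d_I\colon[0,1]^M\to[0,1]^G$, $d_I(x)(g)=\bigwedge_{m\in M}(x(m)\rightarrow I(m,g))$; $h_I\colon[0,1]^G\to[0,1]^M$, $h_I(y)(m)=\bigwedge_{g\in G}(y(g)\rightarrow I(m,g))$. *)

theory Defs
  imports Complex_Main
begin

text \<open>An algebra is given on the carrier UNIV of a type 'a by operations
  oplus, neg and rational constants c (only c r for r in [0,1] are meaningful).
  The MV-zero is the constant c 0.\<close>

definition mv_algebra :: "('a \<Rightarrow> 'a \<Rightarrow> 'a) \<Rightarrow> ('a \<Rightarrow> 'a) \<Rightarrow> 'a \<Rightarrow> bool" where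
  "mv_algebra oplus neg zero \<longleftrightarrow>
     (\<forall>x y z. oplus x (oplus y z) = oplus (oplus x y) z) \<and>
     (\<forall>x y. oplus x y = oplus y x) \<and>
     (\<forall>x. oplus x zero = x) \<and>
     (\<forall>x. neg (neg x) = x) \<and>
     (\<forall>x. oplus x (neg zero) = neg zero) \<and>
     (\<forall>x y. oplus (neg (oplus (neg x) y)) y = oplus (neg (oplus (neg y) x)) x)"

definition rat01 :: "rat set" where
  "rat01 = {r. 0 \<le> r \<and> r \<le> 1}"

definition pavelka_algebra :: "('a \<Rightarrow> 'a \<Rightarrow> 'a) \<Rightarrow> ('a \<Rightarrow> 'a) \<Rightarrow> (rat \<Rightarrow> 'a) \<Rightarrow> bool" where
  "pavelka_algebra oplus neg c \<longleftrightarrow>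
     mv_algebra oplus neg (c 0) \<and>
     (\<forall>r\<in>rat01. \<forall>s\<in>rat01. oplus (c r) (c s) = c (min (r + s) 1)) \<and>
     (\<forall>r\<in>rat01. neg (c r) = c (1 - r))"

definition mv_one :: "('a \<Rightarrow> 'a) \<Rightarrow> 'a \<Rightarrow> 'a" where
  "mv_one neg zero = neg zero"

definition mv_mult :: "('a \<Rightarrow> 'a \<Rightarrow> 'a) \<Rightarrow> ('a \<Rightarrow> 'a) \<Rightarrow> 'a \<Rightarrow> 'a \<Rightarrow> 'a" where
  "mv_mult oplus neg x y = neg (oplus (neg x) (neg y))"

definition mv_le :: "('a \<Rightarrow> 'a \<Rightarrow> 'a) \<Rightarrow> ('a \<Rightarrow> 'a) \<Rightarrow> 'a \<Rightarrow> 'a \<Rightarrow> 'a \<Rightarrow> bool" where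
  "mv_le oplus neg zero x y \<longleftrightarrow> oplus (neg x) y = mv_one neg zero"

definition mv_filter :: "('a \<Rightarrow> 'a \<Rightarrow> 'a) \<Rightarrow> ('a \<Rightarrow> 'a) \<Rightarrow> 'a \<Rightarrow> 'a set \<Rightarrow> bool" where
  "mv_filter oplus neg zero F \<longleftrightarrow>
     mv_one neg zero \<in> F \<and>
     (\<forall>x\<in>F. \<forall>y\<in>F. mv_mult oplus neg x y \<in> F) \<and>
     (\<forall>x\<in>F. \<forall>y. mv_le oplus neg zero x y \<longrightarrow> y \<in> F)"

definition max_filter :: "('a \<Rightarrow> 'a \<Rightarrow> 'a) \<Rightarrow> ('a \<Rightarrow> 'a) \<Rightarrow> 'a \<Rightarrow> 'a set \<Rightarrow> bool" where
  "max_filter oplus neg zero F \<longleftrightarrow>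
     mv_filter oplus neg zero F \<and> F \<noteq> UNIV \<and>
     (\<forall>H. mv_filter oplus neg zero H \<and> H \<noteq> UNIV \<and> F \<subseteq> H \<longrightarrow> H = F)"

definition SpecM :: "('a \<Rightarrow> 'a \<Rightarrow> 'a) \<Rightarrow> ('a \<Rightarrow> 'a) \<Rightarrow> 'a \<Rightarrow> 'a set set" where
  "SpecM oplus neg zero = {F. max_filter oplus neg zero F}"

definition mv_hom01 :: "('a \<Rightarrow> 'a \<Rightarrow> 'a) \<Rightarrow> ('a \<Rightarrow> 'a) \<Rightarrow> 'a \<Rightarrow> ('a \<Rightarrow> real) \<Rightarrow> bool" where
  "mv_hom01 oplus neg zero h \<longleftrightarrow>
     (\<forall>x. 0 \<le> h x \<and> h x \<le> 1) \<and>
     (\<forall>x y. h (oplus x y) = min (h x + h y) 1) \<and>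
     (\<forall>x. h (neg x) = 1 - h x) \<and>
     h zero = 0"

text \<open>For a maximal filter F, the quotient A/F embeds uniquely into [0,1];
  embeddings of A/F correspond to homomorphisms A \<rightarrow> [0,1] whose filter
  kernel h^{-1}(1) is F. x/F is the image of the class of x.\<close>
definition quot_val :: "('a \<Rightarrow> 'a \<Rightarrow> 'a) \<Rightarrow> ('a \<Rightarrow> 'a) \<Rightarrow> 'a \<Rightarrow> 'a set \<Rightarrow> 'a \<Rightarrow> real" where
  "quot_val oplus neg zero F x =
     (THE h. mv_hom01 oplus neg zero h \<and> {y. h y = 1} = F) x"

definition nat_emb :: "('a \<Rightarrow> 'a \<Rightarrow> 'a) \<Rightarrow> ('a \<Rightarrow> 'a) \<Rightarrow> 'a \<Rightarrow> 'a \<Rightarrow> 'a set \<Rightarrow> real" where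
  "nat_emb oplus neg zero x = (\<lambda>F. quot_val oplus neg zero F x)"

definition semisimple :: "('a \<Rightarrow> 'a \<Rightarrow> 'a) \<Rightarrow> ('a \<Rightarrow> 'a) \<Rightarrow> 'a \<Rightarrow> bool" where
  "semisimple oplus neg zero \<longleftrightarrow> \<Inter> (SpecM oplus neg zero) = {mv_one neg zero}"

definition closure_op :: "('a \<Rightarrow> 'a \<Rightarrow> 'a) \<Rightarrow> ('a \<Rightarrow> 'a) \<Rightarrow> 'a \<Rightarrow> ('a \<Rightarrow> 'a) \<Rightarrow> bool" where
  "closure_op oplus neg zero Cl \<longleftrightarrow>
     (\<forall>x y. mv_le oplus neg zero x y \<longrightarrow> mv_le oplus neg zero (Cl x) (Cl y)) \<and>
     (\<forall>x. mv_le oplus neg zero x (Cl x)) \<and>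
     (\<forall>x. Cl (Cl x) = Cl x)"

text \<open>Lukasiewicz implication on [0,1] and infimum in [0,1]
  (the empty infimum being 1).\<close>
definition luk_imp :: "real \<Rightarrow> real \<Rightarrow> real" where
  "luk_imp a b = min 1 (1 - a + b)"

definition inf01 :: "real set \<Rightarrow> real" where
  "inf01 S = Inf (insert 1 S)"

definition dI :: "'m set \<Rightarrow> ('m \<Rightarrow> 'g \<Rightarrow> real) \<Rightarrow> ('m \<Rightarrow> real) \<Rightarrow> 'g \<Rightarrow> real" where
  "dI M I x = (\<lambda>g. inf01 ((\<lambda>m. luk_imp (x m) (I m g)) ` M))"

definition hI :: "'g set \<Rightarrow> ('m \<Rightarrow> 'g \<Rightarrow> real) \<Rightarrow> ('g \<Rightarrow> real) \<Rightarrow> 'm \<Rightarrow> real" where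
  "hI G I y = (\<lambda>m. inf01 ((\<lambda>g. luk_imp (y g) (I m g)) ` G))"

text \<open>Condition (ii): (SpecM, G, I) is a fuzzy formal context whose concept-forming
  closure represents Cl via the natural embedding.\<close>
definition represented_by_context ::
  "('a \<Rightarrow> 'a \<Rightarrow> 'a) \<Rightarrow> ('a \<Rightarrow> 'a) \<Rightarrow> 'a \<Rightarrow> ('a \<Rightarrow> 'a) \<Rightarrow> 'g set \<Rightarrow> ('a set \<Rightarrow> 'g \<Rightarrow> real) \<Rightarrow> bool" where
  "represented_by_context oplus neg zero Cl G I \<longleftrightarrow>
     (let M = SpecM oplus neg zero in
       (\<forall>m\<in>M. \<forall>g\<in>G. 0 \<le> I m g \<and> I m g \<le> 1) \<and>
       (\<forall>x. \<forall>m\<in>M. nat_emb oplus neg zero (Cl x) m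
              = hI G I (dI M I (nat_emb oplus neg zero x)) m))"

end

theory Submission
  imports Defs
begin

locale mv =
  fixes oplus :: "'a \<Rightarrow> 'a \<Rightarrow> 'a" (infixl "\<oplus>" 65)
    and neg :: "'a \<Rightarrow> 'a"
    and zero :: 'a
  assumes mv: "mv_algebra oplus neg zero"
begin

abbreviation one where "one \<equiv> neg zero"
abbreviation mult (infixl "\<odot>" 70) where "x \<odot> y \<equiv> mv_mult oplus neg x y"
abbreviation le (infix "\<preceq>" 50) where "x \<preceq> y \<equiv> mv_le oplus neg zero x y"

lemma assoc: "x \<oplus> (y \<oplus> z) = x \<oplus> y \<oplus> z" using mv unfolding mv_algebra_def by blast
lemma comm: "x \<oplus> y = y \<oplus> x" using mv unfolding mv_algebra_def by blast
lemma zr[simp]: "x \<oplus> zero = x" using mv unfolding mv_algebra_def by blast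
lemma zl[simp]: "zero \<oplus> x = x" using comm zr by metis
lemma nn[simp]: "neg (neg x) = x" using mv unfolding mv_algebra_def by blast
lemma oner[simp]: "x \<oplus> one = one" using mv unfolding mv_algebra_def by blast
lemma onel[simp]: "one \<oplus> x = one" using comm oner by metis
lemma ax6: "neg (neg x \<oplus> y) \<oplus> y = neg (neg y \<oplus> x) \<oplus> x" using mv unfolding mv_algebra_def by blast

lemma comm3: "x \<oplus> (y \<oplus> z) = y \<oplus> (x \<oplus> z)" by (metis assoc comm)
lemmas ac = assoc[symmetric] comm comm3

lemma le_def: "x \<preceq> y \<longleftrightarrow> neg x \<oplus> y = one" by (simp add: mv_le_def mv_one_def)
lemma mult_def: "x \<odot> y = neg (neg x \<oplus> neg y)" by (simp add: mv_mult_def)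

lemma compl[simp]: "x \<oplus> neg x = one"
proof -
  have "neg (neg x \<oplus> one) \<oplus> one = neg (neg one \<oplus> x) \<oplus> x" by (rule ax6)
  thus ?thesis by (simp add: comm)
qed
lemma compl2[simp]: "neg x \<oplus> x = one" using compl comm by metis

lemma mult_comm: "x \<odot> y = y \<odot> x" by (simp add: mult_def comm)
lemma mult_assoc: "x \<odot> (y \<odot> z) = x \<odot> y \<odot> z" by (simp add: mult_def assoc)
lemma mult_one[simp]: "x \<odot> one = x" "one \<odot> x = x" by (simp_all add: mult_def)
lemma mult_zero[simp]: "x \<odot> zero = zero" "zero \<odot> x = zero" by (simp_all add: mult_def)
lemma mult_compl[simp]: "x \<odot> neg x = zero" "neg x \<odot> x = zero" by (simp_all add: mult_def comm)
lemma neg_mult: "neg (x \<odot> y) = neg x \<oplus> neg y" by (simp add: mult_def)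
lemma neg_oplus: "neg (x \<oplus> y) = neg x \<odot> neg y" by (simp add: mult_def)

lemma le_refl[simp]: "x \<preceq> x" by (simp add: le_def)
lemma le_iff_ex: "x \<preceq> y \<longleftrightarrow> (\<exists>z. y = x \<oplus> z)"
proof
  assume "x \<preceq> y"
  hence "neg x \<oplus> y = one" by (simp add: le_def)
  hence "y = neg (neg y \<oplus> x) \<oplus> x" using ax6[of x y] by simp
  thus "\<exists>z. y = x \<oplus> z" by (metis comm)
next
  assume "\<exists>z. y = x \<oplus> z" then obtain z where "y = x \<oplus> z" by blast
  thus "x \<preceq> y" by (simp add: le_def assoc)
qed
lemma le_antisym: "x \<preceq> y \<Longrightarrow> y \<preceq> x \<Longrightarrow> x = y"
  using ax6[of x y] by (simp add: le_def)
lemma le_trans[trans]: "x \<preceq> y \<Longrightarrow> y \<preceq> z \<Longrightarrow> x \<preceq> z"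
  by (metis le_iff_ex assoc)
lemma le_add: "x \<preceq> x \<oplus> y" using le_iff_ex by blast
lemma le_add2: "x \<preceq> y \<oplus> x" using le_iff_ex comm by metis
lemma add_mono: "x \<preceq> y \<Longrightarrow> x \<oplus> z \<preceq> y \<oplus> z"
  by (metis le_iff_ex ac)
lemma add_mono2: "x \<preceq> y \<Longrightarrow> u \<preceq> v \<Longrightarrow> x \<oplus> u \<preceq> y \<oplus> v"
  by (metis add_mono comm le_trans)
lemma neg_anti: "x \<preceq> y \<Longrightarrow> neg y \<preceq> neg x" by (simp add: le_def comm)
lemma zero_le[simp]: "zero \<preceq> x" by (simp add: le_def)
lemma le_one[simp]: "x \<preceq> one" by (simp add: le_def)
lemma resid: "x \<odot> y \<preceq> z \<longleftrightarrow> x \<preceq> neg y \<oplus> z" by (simp add: le_def mult_def assoc)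
lemma mult_mono: "x \<preceq> y \<Longrightarrow> x \<odot> z \<preceq> y \<odot> z"
  by (metis add_mono neg_anti mult_def)
lemma mult_mono2: "x \<preceq> y \<Longrightarrow> u \<preceq> v \<Longrightarrow> x \<odot> u \<preceq> y \<odot> v"
  by (metis mult_mono mult_comm le_trans)
lemma mult_le: "x \<odot> y \<preceq> x" by (metis resid le_add comm)
lemma le_zero_iff: "x \<odot> y \<preceq> zero \<longleftrightarrow> x \<preceq> neg y" by (simp add: resid)
lemma le_eq_zero: "x \<preceq> y \<longleftrightarrow> x \<odot> neg y = zero"
  by (simp add: le_def mult_def) (metis nn)

definition sup (infixl "\<squnion>" 65) where "x \<squnion> y = (x \<odot> neg y) \<oplus> y"
lemma sup_comm: "x \<squnion> y = y \<squnion> x" using ax6[of x y] by (simp add: sup_def mult_def comm)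
lemma sup_ge1: "x \<preceq> x \<squnion> y" by (metis sup_comm sup_def le_add2)
lemma sup_ge2: "y \<preceq> x \<squnion> y" by (metis sup_def le_add2)
lemma sup_least: "x \<preceq> t \<Longrightarrow> y \<preceq> t \<Longrightarrow> x \<squnion> y \<preceq> t"
proof -
  assume a: "x \<preceq> t" "y \<preceq> t"
  have "x \<squnion> y \<preceq> t \<squnion> y" unfolding sup_def by (rule add_mono, rule mult_mono, fact)
  also have "t \<squnion> y = (y \<odot> neg t) \<oplus> t" by (metis sup_comm sup_def)
  also have "\<dots> = t" using a(2) le_eq_zero by simp
  finally show ?thesis .
qed
lemma sup_le_add: "x \<squnion> y \<preceq> x \<oplus> y" unfolding sup_def by (rule add_mono, rule mult_le)

lemma distr: "x \<odot> (y \<squnion> z) = (x \<odot> y) \<squnion> (x \<odot> z)"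
proof (rule le_antisym)
  show "(x \<odot> y) \<squnion> (x \<odot> z) \<preceq> x \<odot> (y \<squnion> z)"
    by (metis sup_least sup_ge1 sup_ge2 mult_mono mult_comm)
  let ?t = "(x \<odot> y) \<squnion> (x \<odot> z)"
  have "y \<preceq> neg x \<oplus> ?t" by (metis resid mult_comm sup_ge1)
  moreover have "z \<preceq> neg x \<oplus> ?t" by (metis resid mult_comm sup_ge2)
  ultimately have "y \<squnion> z \<preceq> neg x \<oplus> ?t" by (rule sup_least)
  thus "x \<odot> (y \<squnion> z) \<preceq> ?t" by (metis resid mult_comm)
qed

lemma sup_one_mult: "a \<squnion> b = one \<Longrightarrow> c \<squnion> b = one \<Longrightarrow> (a \<odot> c) \<squnion> b = one"
proof -
  assume h: "a \<squnion> b = one" "c \<squnion> b = one"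
  have "a \<odot> (c \<squnion> b) = (a \<odot> c) \<squnion> (a \<odot> b)" by (rule distr)
  hence e: "(a \<odot> c) \<squnion> (a \<odot> b) = a" using h by simp
  have "a \<odot> b \<preceq> (a \<odot> c) \<squnion> b" by (metis le_trans mult_le mult_comm sup_ge2)
  hence "a \<preceq> (a \<odot> c) \<squnion> b" by (metis e sup_least sup_ge1)
  moreover have "b \<preceq> (a \<odot> c) \<squnion> b" by (rule sup_ge2)
  ultimately have "one \<preceq> (a \<odot> c) \<squnion> b" using h(1) sup_least by metis
  thus ?thesis by (metis le_antisym le_one)
qed

lemma identT1: "u \<oplus> v \<oplus> (u \<odot> v) = u \<oplus> v"
proof -
  have s1: "u \<oplus> (neg u \<odot> (u \<oplus> v)) = u \<oplus> v"
  proof -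
    have "neg (neg (u \<oplus> v) \<oplus> u) \<oplus> u = neg (neg u \<oplus> (u \<oplus> v)) \<oplus> (u \<oplus> v)" by (rule ax6)
    moreover have "neg u \<oplus> (u \<oplus> v) = one" by (simp add: assoc)
    ultimately show ?thesis by (simp add: mult_def comm)
  qed
  have s2: "(neg u \<odot> (u \<oplus> v)) \<oplus> (u \<odot> v) = v"
  proof -
    have "neg v \<oplus> (u \<odot> v) = u \<oplus> (neg u \<odot> neg v)"
      using ax6[of u "neg v"] by (simp add: mult_def comm)
    hence e: "neg u \<odot> (u \<oplus> v) = v \<odot> neg (u \<odot> v)"
      by (simp add: mult_def comm)
    have "u \<odot> v \<preceq> v" by (metis mult_le mult_comm)
    hence "(u \<odot> v) \<odot> neg v = zero" using le_eq_zero by blast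
    thus ?thesis unfolding e by (metis sup_def sup_comm zl)
  qed
  show ?thesis by (metis s1 s2 assoc)
qed

lemma identT: "(a \<odot> b) \<odot> (a \<oplus> b) = a \<odot> b"
proof -
  have "neg ((a \<odot> b) \<odot> (a \<oplus> b)) = neg a \<oplus> neg b \<oplus> (neg a \<odot> neg b)"
    by (simp add: mult_def)
  also have "\<dots> = neg (a \<odot> b)" using identT1[of "neg a" "neg b"] by (simp add: mult_def)
  finally show ?thesis by (metis nn)
qed

lemma prelin: "(neg x \<oplus> y) \<squnion> (neg y \<oplus> x) = one"
proof -
  let ?a = "x \<odot> neg y" and ?b = "y \<odot> neg x"
  have "?b \<odot> neg ?a = ?b"
    using identT[of y "neg x"] by (simp add: mult_def comm)
  hence "?b \<odot> (neg ?b \<oplus> ?a) = zero"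
    by (metis mult_def mult_compl nn)
  hence "neg (?b \<odot> (neg ?b \<oplus> ?a)) = one" by simp
  moreover have "(neg x \<oplus> y) \<squnion> (neg y \<oplus> x) = neg (?b \<odot> (neg ?b \<oplus> ?a))"
    by (simp add: sup_def mult_def comm)
  ultimately show ?thesis by simp
qed

end


context mv begin

lemma mult_comm3: "x \<odot> (y \<odot> z) = y \<odot> (x \<odot> z)" by (metis mult_assoc mult_comm)
lemmas mult_ac = mult_assoc[symmetric] mult_comm mult_comm3

primrec pw :: "'a \<Rightarrow> nat \<Rightarrow> 'a" where
  "pw x 0 = one" | "pw x (Suc n) = x \<odot> pw x n"

lemma pw_add: "pw x (n + m) = pw x n \<odot> pw x m"
  by (induction n) (auto simp: mult_assoc)
lemma pw_mono: "x \<preceq> y \<Longrightarrow> pw x n \<preceq> pw y n"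
  by (induction n) (auto intro: mult_mono2)
lemma pw_anti: "n \<le> m \<Longrightarrow> pw x m \<preceq> pw x n"
proof -
  assume "n \<le> m" then obtain k where "m = n + k" by (metis le_Suc_ex)
  thus ?thesis by (metis pw_add mult_le)
qed
lemma one_sup: "one \<squnion> b = one" by (simp add: sup_def)
lemma pw_sup_one: "a \<squnion> b = one \<Longrightarrow> pw a n \<squnion> b = one"
proof (induction n)
  case 0 then show ?case by (simp add: one_sup)
next
  case (Suc n) then show ?case using sup_one_mult[of a b "pw a n"] by simp
qed
lemma pw_sup_one2: "a \<squnion> b = one \<Longrightarrow> pw a n \<squnion> pw b m = one"
  by (metis pw_sup_one sup_comm)

definition filt :: "'a set \<Rightarrow> bool" where
  "filt F \<longleftrightarrow> mv_filter oplus neg zero F"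

lemma filt_iff: "filt F \<longleftrightarrow> one \<in> F \<and> (\<forall>x\<in>F. \<forall>y\<in>F. x \<odot> y \<in> F) \<and> (\<forall>x\<in>F. \<forall>y. x \<preceq> y \<longrightarrow> y \<in> F)"
  by (simp add: filt_def mv_filter_def mv_one_def)

end

locale mvmax = mv +
  fixes F
  assumes maxF: "max_filter oplus neg zero F"
begin

lemma filtF: "filt F" using maxF by (simp add: max_filter_def filt_def)
lemma oneF: "one \<in> F" using filtF unfolding filt_iff by blast
lemma multF: "x \<in> F \<Longrightarrow> y \<in> F \<Longrightarrow> x \<odot> y \<in> F" using filtF unfolding filt_iff by blast
lemma upF: "x \<in> F \<Longrightarrow> x \<preceq> y \<Longrightarrow> y \<in> F" using filtF unfolding filt_iff by blast
lemma propF: "F \<noteq> UNIV" using maxF by (simp add: max_filter_def)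
lemma zero_notF: "zero \<notin> F"
proof
  assume "zero \<in> F" hence "\<And>y. y \<in> F" using upF zero_le by blast
  thus False using propF by blast
qed
lemma maxF': "filt H \<Longrightarrow> H \<noteq> UNIV \<Longrightarrow> F \<subseteq> H \<Longrightarrow> H = F"
  using maxF by (simp add: max_filter_def filt_def)

lemma arch: assumes "z \<notin> F" shows "\<exists>n. neg (pw z n) \<in> F"
proof -
  define H where "H = {y. \<exists>f\<in>F. \<exists>n. f \<odot> pw z n \<preceq> y}"
  have "filt H" unfolding filt_iff
  proof (intro conjI ballI allI impI)
    have "one \<odot> pw z 0 \<preceq> one" by simp
    thus "one \<in> H" unfolding H_def using oneF by blast
  next
    fix x y assume "x \<in> H" "y \<in> H"
    then obtain f n g m where fg: "f \<in> F" "f \<odot> pw z n \<preceq> x" "g \<in> F" "g \<odot> pw z m \<preceq> y"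
      unfolding H_def by blast
    have e: "(f \<odot> g) \<odot> pw z (n + m) = (f \<odot> pw z n) \<odot> (g \<odot> pw z m)"
      unfolding pw_add by (simp add: mult_ac)
    have "(f \<odot> pw z n) \<odot> (g \<odot> pw z m) \<preceq> x \<odot> y" using fg(2,4) by (rule mult_mono2)
    hence c: "(f \<odot> g) \<odot> pw z (n + m) \<preceq> x \<odot> y" by (simp only: e)
    have "f \<odot> g \<in> F" using fg multF by blast
    with c show "x \<odot> y \<in> H" unfolding H_def by blast
  next
    fix x y assume "x \<in> H" "x \<preceq> y"
    then obtain f n where "f \<in> F" "f \<odot> pw z n \<preceq> x" unfolding H_def by blast
    moreover have "f \<odot> pw z n \<preceq> y" using calculation(2) \<open>x \<preceq> y\<close> by (rule le_trans)
    ultimately show "y \<in> H" unfolding H_def by blast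
  qed
  moreover have "F \<subseteq> H"
  proof
    fix f assume "f \<in> F"
    moreover have "f \<odot> pw z 0 \<preceq> f" by simp
    ultimately show "f \<in> H" unfolding H_def by blast
  qed
  moreover have "z \<in> H"
  proof -
    have "one \<odot> pw z 1 \<preceq> z" by simp
    thus ?thesis unfolding H_def using oneF by blast
  qed
  ultimately have fH: "filt H" "F \<subseteq> H" "z \<in> H" by blast+
  have "zero \<in> H"
  proof (rule ccontr)
    assume "zero \<notin> H" hence "H \<noteq> UNIV" by blast
    hence "H = F" using maxF'[OF fH(1) _ fH(2)] by blast
    thus False using fH(3) assms by blast
  qed
  then obtain f n where "f \<in> F" "f \<odot> pw z n \<preceq> zero" unfolding H_def by blast
  hence "f \<preceq> neg (pw z n)" using le_zero_iff by blast
  thus ?thesis using \<open>f \<in> F\<close> upF by blast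
qed

lemma le_ax6: "x \<preceq> neg (neg x \<oplus> y) \<oplus> y"
proof -
  have "x \<preceq> neg (neg y \<oplus> x) \<oplus> x" by (rule le_add2)
  thus ?thesis by (simp only: ax6)
qed

definition leF (infix "\<sqsubseteq>" 50) where "x \<sqsubseteq> y \<longleftrightarrow> neg x \<oplus> y \<in> F"

lemma le_leF: "x \<preceq> y \<Longrightarrow> x \<sqsubseteq> y" by (simp add: leF_def le_def oneF)
lemma leF_trans: "x \<sqsubseteq> y \<Longrightarrow> y \<sqsubseteq> z \<Longrightarrow> x \<sqsubseteq> z"
proof -
  assume "x \<sqsubseteq> y" "y \<sqsubseteq> z"
  hence "(neg x \<oplus> y) \<odot> (neg y \<oplus> z) \<in> F" by (simp add: leF_def multF)
  moreover have "(neg x \<oplus> y) \<odot> (neg y \<oplus> z) \<preceq> neg x \<oplus> z"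
  proof -
    have "x \<odot> (neg x \<oplus> y) \<preceq> y" by (simp add: resid le_ax6)
    hence "x \<odot> (neg x \<oplus> y) \<odot> (neg y \<oplus> z) \<preceq> y \<odot> (neg y \<oplus> z)" by (rule mult_mono)
    moreover have "y \<odot> (neg y \<oplus> z) \<preceq> z" by (simp add: resid le_ax6)
    ultimately have "x \<odot> (neg x \<oplus> y) \<odot> (neg y \<oplus> z) \<preceq> z" by (rule le_trans)
    hence "((neg x \<oplus> y) \<odot> (neg y \<oplus> z)) \<odot> x \<preceq> z" by (simp add: mult_ac)
    thus ?thesis by (simp add: resid)
  qed
  ultimately show "x \<sqsubseteq> z" by (simp add: leF_def upF)
qed
lemma leF_refl: "x \<sqsubseteq> x" by (simp add: le_leF)
lemma leF_neg: "x \<sqsubseteq> y \<Longrightarrow> neg y \<sqsubseteq> neg x" by (simp add: leF_def comm)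
lemma leF_add: "x \<sqsubseteq> y \<Longrightarrow> x \<oplus> z \<sqsubseteq> y \<oplus> z"
proof -
  assume h: "x \<sqsubseteq> y"
  have "x \<preceq> neg (neg x \<oplus> y) \<oplus> y" by (rule le_ax6)
  hence "x \<oplus> z \<preceq> neg (neg x \<oplus> y) \<oplus> (y \<oplus> z)" by (metis add_mono assoc)
  hence "(x \<oplus> z) \<odot> (neg x \<oplus> y) \<preceq> y \<oplus> z" by (simp add: resid)
  hence "neg x \<oplus> y \<preceq> neg (x \<oplus> z) \<oplus> (y \<oplus> z)" by (metis resid mult_comm)
  thus ?thesis using h by (simp add: leF_def upF)
qed
lemma leF_add2: "x \<sqsubseteq> y \<Longrightarrow> u \<sqsubseteq> v \<Longrightarrow> x \<oplus> u \<sqsubseteq> y \<oplus> v"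
  by (metis leF_add comm leF_trans)
lemma leF_mult: "x \<sqsubseteq> y \<Longrightarrow> x \<odot> z \<sqsubseteq> y \<odot> z"
  by (metis leF_add leF_neg mult_def)
lemma leF_mult2: "x \<sqsubseteq> y \<Longrightarrow> u \<sqsubseteq> v \<Longrightarrow> x \<odot> u \<sqsubseteq> y \<odot> v"
  by (metis leF_mult mult_comm leF_trans)
lemma leF_pw: "x \<sqsubseteq> y \<Longrightarrow> pw x n \<sqsubseteq> pw y n"
  by (induction n) (auto intro: leF_mult2 leF_refl)

lemma prime: "x \<sqsubseteq> y \<or> y \<sqsubseteq> x"
proof (rule ccontr)
  assume "\<not> ?thesis"
  hence a: "neg x \<oplus> y \<notin> F" "neg y \<oplus> x \<notin> F" by (auto simp: leF_def)
  obtain n m where nm: "neg (pw (neg x \<oplus> y) n) \<in> F" "neg (pw (neg y \<oplus> x) m) \<in> F"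
    using arch a by blast
  have "pw (neg x \<oplus> y) n \<squnion> pw (neg y \<oplus> x) m = one" by (rule pw_sup_one2, rule prelin)
  hence "one \<preceq> pw (neg x \<oplus> y) n \<oplus> pw (neg y \<oplus> x) m" by (metis sup_le_add)
  hence "neg (pw (neg x \<oplus> y) n) \<odot> neg (pw (neg y \<oplus> x) m) \<preceq> zero"
    by (metis neg_anti neg_oplus nn)
  hence "zero \<in> F" using nm multF upF by blast
  thus False using zero_notF by simp
qed

end


lemma r01: "r \<in> rat01 \<longleftrightarrow> 0 \<le> r \<and> r \<le> 1" by (simp add: rat01_def)

locale pmax = mvmax +
  fixes c :: "rat \<Rightarrow> 'a"
  assumes pav: "pavelka_algebra oplus neg c" and czero: "c 0 = zero"
begin

lemma cadd: "r \<in> rat01 \<Longrightarrow> s \<in> rat01 \<Longrightarrow> c r \<oplus> c s = c (min (r + s) 1)"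
  using pav by (simp add: pavelka_algebra_def)
lemma cneg: "r \<in> rat01 \<Longrightarrow> neg (c r) = c (1 - r)"
  using pav by (simp add: pavelka_algebra_def)
lemma cone: "c 1 = one" using cneg[of 0] by (simp add: r01 czero)
lemma cmult: assumes "r \<in> rat01" "s \<in> rat01" shows "c r \<odot> c s = c (max (r + s - 1) 0)"
proof -
  have "c r \<odot> c s = neg (c (1 - r) \<oplus> c (1 - s))" using assms by (simp add: mult_def cneg)
  also have "\<dots> = neg (c (min (2 - r - s) 1))" using assms by (simp add: cadd r01 algebra_simps)
  also have "\<dots> = c (1 - min (2 - r - s) 1)" using assms by (simp add: cneg r01)
  also have "1 - min (2 - r - s) 1 = max (r + s - 1) 0" by (simp add: min_def max_def)
  finally show ?thesis .
qed
lemma cle: assumes "r \<in> rat01" "s \<in> rat01" "r \<le> s" shows "c r \<preceq> c s"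
proof -
  have "neg (c r) \<oplus> c s = c (min (1 - r + s) 1)" using assms by (simp add: cneg cadd r01)
  also have "min (1 - r + s) 1 = 1" using assms by simp
  finally show ?thesis by (simp add: le_def cone)
qed
lemma cpw: assumes "t \<in> rat01" shows "pw (c t) n = c (max (1 - of_nat n * (1 - t)) 0)"
proof (induction n)
  case 0 then show ?case by (simp add: cone)
next
  case (Suc n)
  have "pw (c t) (Suc n) = c t \<odot> c (max (1 - of_nat n * (1 - t)) 0)" using Suc by simp
  also have "\<dots> = c (max (t + max (1 - of_nat n * (1 - t)) 0 - 1) 0)"
    using assms by (intro cmult) (auto simp: r01 max_def)
  also have "max (t + max (1 - of_nat n * (1 - t)) 0 - 1) 0 = max (1 - of_nat (Suc n) * (1 - t)) 0"
    using assms by (auto simp: r01 max_def algebra_simps)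
  finally show ?case .
qed

lemma cstrict: assumes "r \<in> rat01" "s \<in> rat01" "r < s" shows "\<not> c s \<sqsubseteq> c r"
proof
  assume "c s \<sqsubseteq> c r"
  hence "c (1 - s + r) \<in> F" using assms by (simp add: leF_def cneg cadd r01)
  moreover have t: "1 - s + r \<in> rat01" using assms by (simp add: r01)
  ultimately have inF: "pw (c (1 - s + r)) n \<in> F" for n
    by (induction n) (auto simp: oneF multF)
  obtain n :: nat where "1 / (s - r) < of_nat n" using reals_Archimedean2 by blast
  hence "1 < of_nat n * (s - r)" using assms by (simp add: field_simps)
  hence "max (1 - of_nat n * (1 - (1 - s + r))) 0 = 0" by simp
  hence "pw (c (1 - s + r)) n = zero" using cpw[OF t] by (simp add: czero)
  thus False using inF[of n] zero_notF by simp
qed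

definition hF :: "'a \<Rightarrow> real" where
  "hF x = Sup {real_of_rat r | r. r \<in> rat01 \<and> c r \<sqsubseteq> x}"

lemma hset_ne: "{real_of_rat r | r. r \<in> rat01 \<and> c r \<sqsubseteq> x} \<noteq> {}"
proof -
  have "c 0 \<sqsubseteq> x" by (simp add: le_leF czero)
  thus ?thesis by (auto simp: r01 intro!: exI[of _ 0])
qed
lemma hset_bdd: "bdd_above {real_of_rat r | r. r \<in> rat01 \<and> c r \<sqsubseteq> x}"
  by (rule bdd_aboveI[of _ 1]) (auto simp: r01)

lemma h1: "r \<in> rat01 \<Longrightarrow> c r \<sqsubseteq> x \<Longrightarrow> real_of_rat r \<le> hF x"
  unfolding hF_def by (rule cSup_upper[OF _ hset_bdd]) auto

lemma h2: assumes "s \<in> rat01" "x \<sqsubseteq> c s" shows "hF x \<le> real_of_rat s"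
  unfolding hF_def
proof (rule cSup_least[OF hset_ne])
  fix v assume "v \<in> {real_of_rat r | r. r \<in> rat01 \<and> c r \<sqsubseteq> x}"
  then obtain r where r: "v = real_of_rat r" "r \<in> rat01" "c r \<sqsubseteq> x" by blast
  hence "c r \<sqsubseteq> c s" using assms leF_trans by blast
  hence "r \<le> s" using cstrict[OF assms(1) r(2)] by force
  thus "v \<le> real_of_rat s" using r by (simp add: of_rat_less_eq)
qed

lemma h3: assumes "r \<in> rat01" "real_of_rat r < hF x" shows "c r \<sqsubseteq> x"
proof -
  obtain v where "v \<in> {real_of_rat r | r. r \<in> rat01 \<and> c r \<sqsubseteq> x}" "real_of_rat r < v"
    using assms(2) unfolding hF_def using less_cSup_iff[OF hset_ne hset_bdd] by blast
  then obtain r' where r': "r' \<in> rat01" "c r' \<sqsubseteq> x" "r < r'" by (auto simp: of_rat_less)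
  have "c r \<preceq> c r'" using cle assms(1) r' by simp
  thus ?thesis using r'(2) le_leF leF_trans by blast
qed

lemma h4: assumes "s \<in> rat01" "hF x < real_of_rat s" shows "x \<sqsubseteq> c s"
proof (rule ccontr)
  assume "\<not> x \<sqsubseteq> c s"
  hence "c s \<sqsubseteq> x" using prime by blast
  hence "real_of_rat s \<le> hF x" using h1 assms by blast
  thus False using assms by simp
qed

lemma h5: "0 \<le> hF x" "hF x \<le> 1"
proof -
  show "0 \<le> hF x" using h1[of 0 x] by (simp add: r01 le_leF czero)
  have "x \<sqsubseteq> c 1" by (simp add: cone le_leF)
  thus "hF x \<le> 1" using h2[of 1 x] by (simp add: r01)
qed

end


lemma rat_between: "(a::real) < b \<Longrightarrow> \<exists>q::rat. a < of_rat q \<and> of_rat q < b"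
  by (metis Rats_dense_in_real Rats_cases)

lemma of_rat_min: "real_of_rat (min a b) = min (of_rat a) (of_rat b)"
  by (simp add: min_def of_rat_less_eq)

context pmax begin

lemma low: assumes "e > 0" shows "\<exists>r\<in>rat01. c r \<sqsubseteq> x \<and> hF x - e < of_rat r"
proof (cases "hF x - e < 0")
  case True
  have "c 0 \<sqsubseteq> x" by (simp add: le_leF czero)
  thus ?thesis using True by (auto simp: r01 intro!: bexI[of _ 0])
next
  case False
  obtain q where q: "hF x - e < of_rat q" "of_rat q < hF x" using rat_between[of "hF x - e" "hF x"] assms by auto
  have "0 \<le> real_of_rat q" using q False by linarith
  moreover have "real_of_rat q \<le> 1" using q h5[of x] by linarith
  ultimately have qr: "q \<in> rat01" by (simp add: r01)
  thus ?thesis using h3[OF qr q(2)] q by blast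
qed

lemma up: assumes "e > 0" shows "\<exists>s\<in>rat01. x \<sqsubseteq> c s \<and> of_rat s < hF x + e"
proof (cases "hF x + e > 1")
  case True
  have "x \<sqsubseteq> c 1" by (simp add: le_leF cone)
  thus ?thesis using True by (auto simp: r01 intro!: bexI[of _ 1])
next
  case False
  obtain q where q: "hF x < of_rat q" "of_rat q < hF x + e" using rat_between[of "hF x" "hF x + e"] assms by auto
  have "0 \<le> real_of_rat q" using q h5[of x] by linarith
  moreover have "real_of_rat q \<le> 1" using q False by linarith
  ultimately have qr: "q \<in> rat01" by (simp add: r01)
  thus ?thesis using h4[OF qr q(1)] q by blast
qed

lemma hom_add: "hF (x \<oplus> y) = min (hF x + hF y) 1"
proof (rule antisym)
  show "hF (x \<oplus> y) \<le> min (hF x + hF y) 1"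
  proof (rule ccontr)
    assume a: "\<not> ?thesis"
    hence a': "hF (x \<oplus> y) > hF x + hF y" using h5[of "x \<oplus> y"] by linarith
    define e where "e = (hF (x \<oplus> y) - (hF x + hF y)) / 2"
    have e: "e > 0" using a' by (simp add: e_def)
    obtain r where r: "r \<in> rat01" "x \<sqsubseteq> c r" "of_rat r < hF x + e" using up[OF e] by blast
    obtain s where s: "s \<in> rat01" "y \<sqsubseteq> c s" "of_rat s < hF y + e" using up[OF e] by blast
    have "x \<oplus> y \<sqsubseteq> c r \<oplus> c s" using r s leF_add2 by blast
    hence "x \<oplus> y \<sqsubseteq> c (min (r + s) 1)" using r s cadd by simp
    moreover have "min (r + s) 1 \<in> rat01" using r s by (auto simp: r01)
    ultimately have "hF (x \<oplus> y) \<le> of_rat (min (r + s) 1)" using h2 by blast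
    also have "\<dots> \<le> of_rat r + of_rat s" by (simp add: of_rat_min of_rat_add[symmetric])
    finally have "hF (x \<oplus> y) \<le> of_rat r + of_rat s" .
    thus False using r(3) s(3) e_def by argo
  qed
  show "min (hF x + hF y) 1 \<le> hF (x \<oplus> y)"
  proof (rule ccontr)
    assume a: "\<not> ?thesis"
    define e where "e = (hF x + hF y - hF (x \<oplus> y)) / 2"
    have e: "e > 0" using a by (simp add: e_def)
    obtain r where r: "r \<in> rat01" "c r \<sqsubseteq> x" "hF x - e < of_rat r" using low[OF e] by blast
    obtain s where s: "s \<in> rat01" "c s \<sqsubseteq> y" "hF y - e < of_rat s" using low[OF e] by blast
    have "c r \<oplus> c s \<sqsubseteq> x \<oplus> y" using r s leF_add2 by blast
    hence "c (min (r + s) 1) \<sqsubseteq> x \<oplus> y" using r s cadd by simp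
    moreover have "min (r + s) 1 \<in> rat01" using r s by (auto simp: r01)
    ultimately have "of_rat (min (r + s) 1) \<le> hF (x \<oplus> y)" using h1 by blast
    hence "min (of_rat r + of_rat s) 1 \<le> hF (x \<oplus> y)" by (simp add: of_rat_min of_rat_add)
    thus False using r(3) s(3) e_def a by argo
  qed
qed

lemma hom_neg: "hF (neg x) = 1 - hF x"
proof (rule antisym)
  show "hF (neg x) \<le> 1 - hF x"
  proof (rule ccontr)
    assume a: "\<not> ?thesis"
    define e where "e = (hF (neg x) - (1 - hF x)) / 2"
    have e: "e > 0" using a by (simp add: e_def)
    obtain r where r: "r \<in> rat01" "c r \<sqsubseteq> x" "hF x - e < of_rat r" using low[OF e] by blast
    have "neg x \<sqsubseteq> c (1 - r)" using leF_neg[OF r(2)] r(1) by (simp add: cneg)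
    moreover have "1 - r \<in> rat01" using r by (simp add: r01)
    ultimately have "hF (neg x) \<le> of_rat (1 - r)" using h2 by blast
    moreover have "real_of_rat (1 - r) = 1 - of_rat r" by (simp add: of_rat_diff)
    ultimately show False using r(3) e e_def by argo
  qed
  show "1 - hF x \<le> hF (neg x)"
  proof (rule ccontr)
    assume a: "\<not> ?thesis"
    define e where "e = ((1 - hF x) - hF (neg x)) / 2"
    have e: "e > 0" using a by (simp add: e_def)
    obtain r where r: "r \<in> rat01" "x \<sqsubseteq> c r" "of_rat r < hF x + e" using up[OF e] by blast
    have "c (1 - r) \<sqsubseteq> neg x" using leF_neg[OF r(2)] r(1) by (simp add: cneg)
    moreover have "1 - r \<in> rat01" using r by (simp add: r01)
    ultimately have "of_rat (1 - r) \<le> hF (neg x)" using h1 by blast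
    moreover have "real_of_rat (1 - r) = 1 - of_rat r" by (simp add: of_rat_diff)
    ultimately show False using r(3) e e_def by argo
  qed
qed

lemma hom_zero: "hF zero = 0"
proof -
  have "zero \<sqsubseteq> c 0" by (simp add: czero leF_refl)
  hence "hF zero \<le> 0" using h2[of 0] by (simp add: r01)
  thus ?thesis using h5 by (simp add: antisym)
qed

lemma hc: "r \<in> rat01 \<Longrightarrow> hF (c r) = of_rat r"
  using h1[of r "c r"] h2[of r "c r"] leF_refl by simp

lemma kernel: "hF y = 1 \<longleftrightarrow> y \<in> F"
proof
  assume y: "y \<in> F"
  have "c 1 \<sqsubseteq> y" using y by (simp add: leF_def cone)
  hence "1 \<le> hF y" using h1[of 1 y] by (simp add: r01)
  thus "hF y = 1" using h5 by (simp add: antisym)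
next
  assume h: "hF y = 1"
  show "y \<in> F"
  proof (rule ccontr)
    assume "y \<notin> F"
    then obtain n where n: "neg (pw y n) \<in> F" using arch by blast
    define r :: rat where "r = 1 - 1 / (of_nat n + 1)"
    have r: "r \<in> rat01" by (simp add: r_def r01 field_simps)
    have "real_of_rat r < 1" by (simp add: r_def of_rat_diff of_rat_divide)
    hence "c r \<sqsubseteq> y" using h3[OF r] h by simp
    hence "pw (c r) n \<sqsubseteq> pw y n" by (rule leF_pw)
    moreover have "pw y n \<sqsubseteq> c 0" using n by (simp add: leF_def czero)
    ultimately have a: "pw (c r) n \<sqsubseteq> c 0" by (rule leF_trans)
    define t where "t = max (1 - of_nat n * (1 - r)) 0"
    have t: "t \<in> rat01" "0 < t" using r by (auto simp: t_def r01 r_def field_simps)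
    have "pw (c r) n = c t" using cpw[OF r] by (simp add: t_def)
    thus False using a cstrict[of 0 t] t by (simp add: r01)
  qed
qed

lemma hom01: "mv_hom01 oplus neg zero hF"
  unfolding mv_hom01_def using h5 hom_add hom_neg hom_zero by blast

end


lemma rat_nat_frac: assumes "(r::rat) \<ge> 0"
  obtains p q :: nat where "q > 0" "r = of_nat p / of_nat q"
proof -
  obtain a b where ab: "quotient_of r = (a, b)" by (cases "quotient_of r") auto
  have b: "b > 0" using quotient_of_denom_pos[OF ab] .
  have r: "r = of_int a / of_int b" using quotient_of_div[OF ab] .
  have "a \<ge> 0" using assms b r by (simp add: zero_le_divide_iff)
  hence "r = of_nat (nat a) / of_nat (nat b)" using r b by simp
  moreover have "nat b > 0" using b by simp
  ultimately show ?thesis using that by blast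
qed

context pmax begin

lemma hom_c: assumes g: "mv_hom01 oplus neg zero g" and r: "r \<in> rat01"
  shows "g (c r) = of_rat r"
proof -
  have gadd: "g (x \<oplus> y) = min (g x + g y) 1" for x y using g by (simp add: mv_hom01_def)
  have gneg: "g (neg x) = 1 - g x" for x using g by (simp add: mv_hom01_def)
  have gz: "g zero = 0" using g by (simp add: mv_hom01_def)
  have gpos: "0 \<le> g x" for x using g by (simp add: mv_hom01_def)
  obtain p q :: nat where pq: "q > 0" "r = of_nat p / of_nat q" using r by (auto simp: r01 elim: rat_nat_frac)
  define a where "a = g (c (1 / of_nat q))"
  have a0: "0 \<le> a" by (simp add: a_def gpos)
  have a1: "a \<le> 1" using g by (simp add: a_def mv_hom01_def)
  have q1: "1 / of_nat q \<in> rat01" using pq by (simp add: r01)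
  have A: "k \<le> q \<Longrightarrow> g (c (of_nat k / of_nat q)) = min (of_nat k * a) 1" for k
  proof (induction k)
    case 0 thus ?case by (simp add: czero gz)
  next
    case (Suc k)
    have k: "of_nat k / of_nat q \<in> rat01" using Suc pq by (simp add: r01)
    have "c (of_nat k / of_nat q) \<oplus> c (1 / of_nat q) = c (min (of_nat k / of_nat q + 1 / of_nat q) 1)"
      using cadd[OF k q1] .
    also have "min (of_nat k / of_nat q + 1 / of_nat q) 1 = (of_nat (Suc k) / (of_nat q :: rat))"
      using Suc pq by (simp add: field_simps)
    finally have "g (c (of_nat (Suc k) / of_nat q)) = min (min (of_nat k * a) 1 + a) 1"
      using Suc by (metis gadd a_def Suc_leD)
    thus ?case using a0 by (simp add: min_def algebra_simps)
  qed
  have "g (c 1) = 1" by (simp add: cone gneg gz)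
  hence qa: "min (of_nat q * a) 1 = 1" using A[of q] pq by simp
  have "a = 1 / of_nat q"
  proof (cases "q = 1")
    case True thus ?thesis using qa a1 by (simp add: min_def split: if_splits)
  next
    case False
    hence q2: "q \<ge> 2" using pq by simp
    have "neg (c (1 / of_nat q)) = c (1 - 1 / of_nat q)" using cneg[OF q1] .
    also have "1 - 1 / of_nat q = (of_nat (q - 1) / (of_nat q :: rat))" using q2 by (simp add: field_simps of_nat_diff)
    finally have e1: "neg (c (1 / of_nat q)) = c (of_nat (q - 1) / of_nat q)" .
    have "1 - a = g (neg (c (1 / of_nat q)))" using gneg a_def by simp
    also have "\<dots> = min (of_nat (q - 1) * a) 1" unfolding e1 using A[of "q - 1"] by simp
    finally have "1 - a = min (of_nat (q - 1) * a) 1" .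
    moreover have "real (q - 1) = real q - 1" using q2 by simp
    ultimately have "1 - a = min ((of_nat q - 1) * a) 1" by simp
    thus ?thesis using qa pq a0 by (auto simp: min_def field_simps split: if_splits)
  qed
  have pq2: "p \<le> q"
  proof -
    have "of_nat p / of_nat q \<le> (1::rat)" using pq r by (simp add: r01)
    hence "(of_nat p :: rat) \<le> of_nat q" using pq by (simp add: divide_le_eq_1)
    thus ?thesis by simp
  qed
  have "g (c r) = min (of_nat p * a) 1" using A[OF pq2] pq by simp
  also have "\<dots> = of_nat p / of_nat q"
  proof -
    have "real p / real q \<le> 1" using pq pq2 by (simp add: divide_le_eq_1)
    thus ?thesis using \<open>a = 1 / of_nat q\<close> by (simp add: min_def)
  qed
  also have "\<dots> = of_rat r" using pq by (simp add: of_rat_divide)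
  finally show ?thesis .
qed

lemma hom_unique: assumes g: "mv_hom01 oplus neg zero g" and k: "{y. g y = 1} = F"
  shows "g = hF"
proof
  fix x
  have gadd: "g (x \<oplus> y) = min (g x + g y) 1" for x y using g by (simp add: mv_hom01_def)
  have gneg: "g (neg x) = 1 - g x" for x using g by (simp add: mv_hom01_def)
  have g01: "0 \<le> g x" "g x \<le> 1" for x using g by (simp_all add: mv_hom01_def)
  show "g x = hF x"
  proof (rule ccontr)
    assume ne: "g x \<noteq> hF x"
    show False
    proof (cases "g x < hF x")
      case True
      then obtain q where q: "g x < of_rat q" "of_rat q < hF x" using rat_between by blast
      have "0 \<le> real_of_rat q" "real_of_rat q \<le> 1" using q g01[of x] h5[of x] by linarith+
      hence qr: "q \<in> rat01" using of_rat_less_eq[of 0 q] of_rat_less_eq[of q 1] by (simp add: r01)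
      have "c q \<sqsubseteq> x" using h3[OF qr q(2)] .
      hence "g (neg (c q) \<oplus> x) = 1" using k by (auto simp: leF_def)
      hence "min (1 - of_rat q + g x) 1 = 1" using gadd gneg hom_c[OF g qr] by simp
      thus False using q by (simp add: min_def split: if_splits)
    next
      case False
      hence F: "hF x < g x" using ne by simp
      then obtain q where q: "hF x < of_rat q" "of_rat q < g x" using rat_between by blast
      have "0 \<le> real_of_rat q" "real_of_rat q \<le> 1" using q g01[of x] h5[of x] by linarith+
      hence qr: "q \<in> rat01" using of_rat_less_eq[of 0 q] of_rat_less_eq[of q 1] by (simp add: r01)
      have "x \<sqsubseteq> c q" using h4[OF qr q(1)] .
      hence "g (neg x \<oplus> c q) = 1" using k by (auto simp: leF_def)
      hence "min (1 - g x + of_rat q) 1 = 1" using gadd gneg hom_c[OF g qr] by simp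
      thus False using q by (simp add: min_def split: if_splits)
    qed
  qed
qed

lemma quot_val_eq: "quot_val oplus neg zero F = hF"
proof -
  have P: "mv_hom01 oplus neg zero hF \<and> {y. hF y = 1} = F" using hom01 kernel by blast
  have "(THE h. mv_hom01 oplus neg zero h \<and> {y. h y = 1} = F) = hF"
    by (rule the_equality) (use P hom_unique in auto)
  thus ?thesis unfolding quot_val_def[abs_def] by simp
qed

end


lemma inf01_lower: "s \<in> S \<Longrightarrow> \<forall>t\<in>S. 0 \<le> t \<Longrightarrow> inf01 S \<le> s"
  unfolding inf01_def by (rule cInf_lower) (auto intro!: bdd_belowI[of _ 0])
lemma inf01_greatest: "z \<le> 1 \<Longrightarrow> \<forall>t\<in>S. z \<le> t \<Longrightarrow> z \<le> inf01 S"
  unfolding inf01_def by (rule cInf_greatest) auto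
lemma inf01_le1: "\<forall>t\<in>S. 0 \<le> t \<Longrightarrow> inf01 S \<le> 1"
  unfolding inf01_def by (rule cInf_lower) (auto intro!: bdd_belowI[of _ 0])
lemma inf01_ge0: "\<forall>t\<in>S. 0 \<le> t \<Longrightarrow> 0 \<le> inf01 S"
  by (rule inf01_greatest) auto
lemma luk_ge0: "a \<le> 1 \<Longrightarrow> 0 \<le> b \<Longrightarrow> 0 \<le> luk_imp a b"
  by (simp add: luk_imp_def)

locale pmain = mv +
  fixes c :: "rat \<Rightarrow> 'a" and Cl :: "'a \<Rightarrow> 'a"
  assumes pav: "pavelka_algebra oplus neg c" and czero: "c 0 = zero"
    and ss: "semisimple oplus neg zero"
    and clo: "closure_op oplus neg zero Cl"
begin

abbreviation "M \<equiv> SpecM oplus neg zero"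
abbreviation nv where "nv x F \<equiv> quot_val oplus neg zero F x"

lemma pm: "F \<in> M \<Longrightarrow> pmax oplus neg zero F c"
  by unfold_locales (use pav czero in \<open>auto simp: SpecM_def\<close>)

lemma qv: "F \<in> M \<Longrightarrow> quot_val oplus neg zero F = pmax.hF oplus neg F c"
  using pmax.quot_val_eq[OF pm] .

lemma nv_add: "F \<in> M \<Longrightarrow> nv (x \<oplus> y) F = min (nv x F + nv y F) 1"
  using pmax.hom_add[OF pm] qv by simp
lemma nv_neg: "F \<in> M \<Longrightarrow> nv (neg x) F = 1 - nv x F"
  using pmax.hom_neg[OF pm] qv by simp
lemma nv01: "F \<in> M \<Longrightarrow> 0 \<le> nv x F" "F \<in> M \<Longrightarrow> nv x F \<le> 1"
  using pmax.h5[OF pm] qv by simp_all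
lemma nv_c: "F \<in> M \<Longrightarrow> r \<in> rat01 \<Longrightarrow> nv (c r) F = of_rat r"
  using pmax.hc[OF pm] qv by simp
lemma nv_ker: "F \<in> M \<Longrightarrow> nv x F = 1 \<longleftrightarrow> x \<in> F"
  using pmax.kernel[OF pm] qv by simp
lemma nv_mult: "F \<in> M \<Longrightarrow> nv (x \<odot> y) F = max (nv x F + nv y F - 1) 0"
  by (simp add: mult_def nv_neg nv_add min_def max_def)

lemma nv_le: "x \<preceq> y \<longleftrightarrow> (\<forall>F\<in>M. nv x F \<le> nv y F)"
proof
  assume "x \<preceq> y"
  hence e: "neg x \<oplus> y = one" by (simp add: le_def)
  show "\<forall>F\<in>M. nv x F \<le> nv y F"
  proof
    fix F assume F: "F \<in> M"
    have "nv (neg x \<oplus> y) F = 1" using e nv_neg[OF F, of zero] nv_c[OF F, of 0] czero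
      by (simp add: r01)
    thus "nv x F \<le> nv y F" using nv_add[OF F] nv_neg[OF F] by (simp add: min_def split: if_splits)
  qed
next
  assume a: "\<forall>F\<in>M. nv x F \<le> nv y F"
  have "neg x \<oplus> y \<in> \<Inter> M"
  proof
    fix F assume F: "F \<in> M"
    have e: "nv (neg x \<oplus> y) F = min (1 - nv x F + nv y F) 1" using nv_add[OF F] nv_neg[OF F] by simp
    have "1 \<le> 1 - nv x F + nv y F" using a F by auto
    hence "nv (neg x \<oplus> y) F = 1" using e by simp
    thus "neg x \<oplus> y \<in> F" using nv_ker[OF F] by simp
  qed
  moreover have S: "\<Inter> M = {one}" using ss by (simp add: semisimple_def mv_one_def)
  ultimately have "neg x \<oplus> y = one" by simp
  thus "x \<preceq> y" by (simp add: le_def)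
qed

lemma cl_mono: "x \<preceq> y \<Longrightarrow> Cl x \<preceq> Cl y" using clo by (simp add: closure_op_def)
lemma cl_ext: "x \<preceq> Cl x" using clo by (simp add: closure_op_def)
lemma cl_idem: "Cl (Cl x) = Cl x" using clo by (simp add: closure_op_def)

definition condi where
  "condi \<longleftrightarrow> (\<forall>r\<in>rat01. \<forall>x. c r \<odot> Cl x \<preceq> Cl (c r \<odot> x))"

lemma i_ii: assumes ci: condi
  shows "represented_by_context oplus neg zero Cl (UNIV :: 'a set) (\<lambda>F g. nv (Cl g) F)"
proof -
  let ?I = "\<lambda>F g. nv (Cl g) F"
  let ?S = "\<lambda>X g. dI M ?I X g"
  have Sle1: "?S X g \<le> 1" if X: "\<forall>m\<in>M. X m \<le> 1" for X g
    unfolding dI_def by (rule inf01_le1) (auto intro!: luk_ge0 simp: X nv01)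
  have main: "nv (Cl x) F = hI UNIV ?I (dI M ?I (nat_emb oplus neg zero x)) F" if F: "F \<in> M" for x F
  proof -
    let ?X = "nat_emb oplus neg zero x"
    have X1: "\<forall>m\<in>M. ?X m \<le> 1" by (simp add: nat_emb_def nv01)
    have vals: "\<forall>t\<in>(\<lambda>g. luk_imp (?S ?X g) (?I F g)) ` UNIV. 0 \<le> t"
      using Sle1[OF X1] by (auto intro!: luk_ge0 simp: F nv01)
    have Sx: "?S ?X x = 1"
    proof (rule antisym)
      show "?S ?X x \<le> 1" by (rule Sle1[OF X1])
      show "1 \<le> ?S ?X x" unfolding dI_def
      proof (rule inf01_greatest, simp, rule ballI)
        fix t assume "t \<in> (\<lambda>m. luk_imp (?X m) (?I m x)) ` M"
        then obtain m where m: "m \<in> M" "t = luk_imp (?X m) (?I m x)" by blast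
        have "nv x m \<le> nv (Cl x) m" using cl_ext nv_le m by blast
        thus "1 \<le> t" using m by (simp add: luk_imp_def nat_emb_def)
      qed
    qed
    have "hI UNIV ?I (dI M ?I ?X) F \<le> nv (Cl x) F"
    proof -
      have "hI UNIV ?I (dI M ?I ?X) F \<le> luk_imp (?S ?X x) (?I F x)"
        unfolding hI_def by (rule inf01_lower[OF _ vals]) auto
      also have "\<dots> = nv (Cl x) F" using Sx nv01[OF F] by (simp add: luk_imp_def)
      finally show ?thesis .
    qed
    moreover have "nv (Cl x) F \<le> hI UNIV ?I (dI M ?I ?X) F"
      unfolding hI_def
    proof (rule inf01_greatest[OF nv01(2)[OF F]], rule ballI)
      fix t assume "t \<in> (\<lambda>g. luk_imp (dI M ?I ?X g) (?I F g)) ` UNIV"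
      then obtain g where t: "t = luk_imp (?S ?X g) (?I F g)" by blast
      let ?a = "nv (Cl x) F" and ?b = "nv (Cl g) F" and ?s = "?S ?X g"
      show "?a \<le> t"
      proof (rule ccontr)
        assume "\<not> ?a \<le> t"
        hence lt: "1 - ?a + ?b < ?s" using nv01[OF F, of "Cl x"] t by (auto simp: luk_imp_def)
        obtain q where q: "1 - ?a + ?b < of_rat q" "of_rat q < ?s" using rat_between[OF lt] by blast
        have "0 \<le> real_of_rat q" "real_of_rat q \<le> 1"
          using q nv01[OF F, of "Cl x"] nv01[OF F, of "Cl g"] Sle1[OF X1, of g] by linarith+
        hence qr: "q \<in> rat01" using of_rat_less_eq[of 0 q] of_rat_less_eq[of q 1] by (simp add: r01)
        have "c q \<odot> x \<preceq> Cl g" unfolding nv_le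
        proof
          fix m assume m: "m \<in> M"
          have "?s \<le> luk_imp (?X m) (?I m g)" unfolding dI_def
            by (rule inf01_lower) (use m in \<open>auto intro!: luk_ge0 simp: nv01 nat_emb_def\<close>)
          hence "of_rat q \<le> 1 - nv x m + nv (Cl g) m" using q by (simp add: luk_imp_def nat_emb_def)
          thus "nv (c q \<odot> x) m \<le> nv (Cl g) m" using nv_mult[OF m] nv_c[OF m qr] nv01[OF m] by simp
        qed
        hence "Cl (c q \<odot> x) \<preceq> Cl g" using cl_mono cl_idem by metis
        moreover have "c q \<odot> Cl x \<preceq> Cl (c q \<odot> x)" using ci qr by (simp add: condi_def)
        ultimately have "c q \<odot> Cl x \<preceq> Cl g" using le_trans by blast
        hence "nv (c q \<odot> Cl x) F \<le> ?b" using nv_le F by blast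
        hence "of_rat q + ?a - 1 \<le> ?b" using nv_mult[OF F] nv_c[OF F qr] by simp
        thus False using q by linarith
      qed
    qed
    ultimately show ?thesis by simp
  qed
  have main2: "nat_emb oplus neg zero (Cl x) F = hI UNIV ?I (dI M ?I (nat_emb oplus neg zero x)) F"
    if "F \<in> M" for x F
    using main[OF that] by (simp add: nat_emb_def)
  show ?thesis unfolding represented_by_context_def Let_def
  proof (intro conjI ballI allI)
    fix m g assume "m \<in> M" thus "0 \<le> ?I m g" "?I m g \<le> 1" by (simp_all add: nv01)
  next
    fix x m assume "m \<in> M" thus "nat_emb oplus neg zero (Cl x) m = hI UNIV ?I (dI M ?I (nat_emb oplus neg zero x)) m"
      by (rule main2)
  qed
qed

lemma ii_i: assumes R: "represented_by_context oplus neg zero Cl (G :: 'g set) I"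
  shows condi
proof -
  have I01: "\<And>m g. m \<in> M \<Longrightarrow> g \<in> G \<Longrightarrow> 0 \<le> I m g \<and> I m g \<le> 1"
    using R by (simp add: represented_by_context_def Let_def)
  have rep: "\<And>x m. m \<in> M \<Longrightarrow> nv (Cl x) m = hI G I (dI M I (nat_emb oplus neg zero x)) m"
    using R by (simp add: represented_by_context_def Let_def nat_emb_def)
  have D1: "dI M I X g \<le> 1" if "\<forall>m\<in>M. X m \<le> 1" "g \<in> G" for X g
    unfolding dI_def by (rule inf01_le1) (use that I01 in \<open>auto intro!: luk_ge0\<close>)
  have H1: "hI G I Y m \<le> 1" "0 \<le> hI G I Y m" if "\<forall>g\<in>G. Y g \<le> 1" "m \<in> M" for Y m
    unfolding hI_def by (rule inf01_le1, use that I01 in \<open>auto intro!: luk_ge0\<close>)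
      (rule inf01_ge0, use that I01 in \<open>auto intro!: luk_ge0\<close>)
  show condi unfolding condi_def
  proof (intro ballI allI)
    fix r x assume r: "r \<in> rat01"
    let ?X = "nat_emb oplus neg zero x" and ?Y = "nat_emb oplus neg zero (c r \<odot> x)"
    let ?r = "real_of_rat r"
    have r01': "0 \<le> ?r" "?r \<le> 1" using r of_rat_less_eq[of 0 r] of_rat_less_eq[of r 1] by (simp_all add: r01)
    have X1: "\<forall>m\<in>M. ?X m \<le> 1" and Y1: "\<forall>m\<in>M. ?Y m \<le> 1" by (simp_all add: nat_emb_def nv01)
    have DX1: "\<forall>g\<in>G. dI M I ?X g \<le> 1" and DY1: "\<forall>g\<in>G. dI M I ?Y g \<le> 1"
      using D1 X1 Y1 by blast+
    have key: "dI M I ?Y g + ?r - 1 \<le> dI M I ?X g" if g: "g \<in> G" for g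
      unfolding dI_def[of M I ?X]
    proof (rule inf01_greatest)
      show "dI M I ?Y g + ?r - 1 \<le> 1" using bspec[OF DY1 g] r01' by linarith
    next
      show "\<forall>t\<in>(\<lambda>m. luk_imp (?X m) (I m g)) ` M. dI M I ?Y g + ?r - 1 \<le> t"
      proof
      fix t assume "t \<in> (\<lambda>m. luk_imp (?X m) (I m g)) ` M"
      then obtain m where m: "m \<in> M" "t = luk_imp (?X m) (I m g)" by blast
      have "dI M I ?Y g \<le> luk_imp (?Y m) (I m g)" unfolding dI_def
        by (rule inf01_lower) (use m g I01 in \<open>auto intro!: luk_ge0 simp: nv01 nat_emb_def\<close>)
      moreover have "?Y m = max (?r + nv x m - 1) 0" using nv_mult[OF m(1)] nv_c[OF m(1) r]
        by (simp add: nat_emb_def)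
      ultimately have "dI M I ?Y g \<le> 1 - max (?r + nv x m - 1) 0 + I m g"
        by (simp add: luk_imp_def)
      moreover have "?r + nv x m - 1 \<le> max (?r + nv x m - 1) 0" by simp
      ultimately have A: "dI M I ?Y g + ?r - 1 \<le> 1 - nv x m + I m g" by linarith
      have B: "dI M I ?Y g + ?r - 1 \<le> 1" using bspec[OF DY1 g] r01' by linarith
      show "dI M I ?Y g + ?r - 1 \<le> t" using A B m(2) by (simp add: luk_imp_def nat_emb_def)
      qed
    qed
    show "c r \<odot> Cl x \<preceq> Cl (c r \<odot> x)" unfolding nv_le
    proof
      fix F assume F: "F \<in> M"
      have lhs: "nv (c r \<odot> Cl x) F = max (?r + hI G I (dI M I ?X) F - 1) 0"
        using nv_mult[OF F] nv_c[OF F r] rep[OF F] by simp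
      have rhs: "nv (Cl (c r \<odot> x)) F = hI G I (dI M I ?Y) F" using rep[OF F] .
      have "?r + hI G I (dI M I ?X) F - 1 \<le> hI G I (dI M I ?Y) F"
        unfolding hI_def[of G I "dI M I ?Y"]
      proof (rule inf01_greatest)
        show "?r + hI G I (dI M I ?X) F - 1 \<le> 1" using H1(1)[OF DX1 F] r01' by linarith
      next
        show "\<forall>t\<in>(\<lambda>g. luk_imp (dI M I ?Y g) (I F g)) ` G. ?r + hI G I (dI M I ?X) F - 1 \<le> t"
        proof
        fix t assume "t \<in> (\<lambda>g. luk_imp (dI M I ?Y g) (I F g)) ` G"
        then obtain g where g: "g \<in> G" "t = luk_imp (dI M I ?Y g) (I F g)" by blast
        have "hI G I (dI M I ?X) F \<le> luk_imp (dI M I ?X g) (I F g)" unfolding hI_def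
          by (rule inf01_lower) (use g F I01 DX1 in \<open>auto intro!: luk_ge0\<close>)
        hence "hI G I (dI M I ?X) F \<le> 1 - dI M I ?X g + I F g" by (simp add: luk_imp_def)
        hence A: "?r + hI G I (dI M I ?X) F - 1 \<le> 1 - dI M I ?Y g + I F g" using key[OF g(1)] by linarith
        have B: "?r + hI G I (dI M I ?X) F - 1 \<le> 1" using H1(1)[OF DX1 F] r01' by linarith
        show "?r + hI G I (dI M I ?X) F - 1 \<le> t" using A B g(2) by (simp add: luk_imp_def)
        qed
      qed
      moreover have "0 \<le> hI G I (dI M I ?Y) F" using H1(2)[OF DY1 F] .
      ultimately show "nv (c r \<odot> Cl x) F \<le> nv (Cl (c r \<odot> x)) F" using lhs rhs by simp
    qed
  qed
qed

end


theorem theorem17: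
  fixes oplus :: "'a \<Rightarrow> 'a \<Rightarrow> 'a" and neg :: "'a \<Rightarrow> 'a" and c :: "rat \<Rightarrow> 'a"
    and Cl :: "'a \<Rightarrow> 'a"
  assumes "pavelka_algebra oplus neg c"
    and "semisimple oplus neg (c 0)"
    and "closure_op oplus neg (c 0) Cl"
  shows "((\<forall>r\<in>rat01. \<forall>x. mv_le oplus neg (c 0) (mv_mult oplus neg (c r) (Cl x))
                                       (Cl (mv_mult oplus neg (c r) x)))
          \<longleftrightarrow> (\<exists>(G :: 'a set) I. represented_by_context oplus neg (c 0) Cl G I))
       \<and> ((\<exists>(G :: 'g set) I. represented_by_context oplus neg (c 0) Cl G I)
          \<longrightarrow> (\<forall>r\<in>rat01. \<forall>x. mv_le oplus neg (c 0) (mv_mult oplus neg (c r) (Cl x))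
                                       (Cl (mv_mult oplus neg (c r) x))))"
proof -
  have mv: "mv_algebra oplus neg (c 0)" using assms(1) by (simp add: pavelka_algebra_def)
  interpret P: pmain oplus neg "c 0" c Cl
    by (intro pmain.intro mv.intro pmain_axioms.intro) (use assms mv in auto)
  have ci: "P.condi \<longleftrightarrow> (\<forall>r\<in>rat01. \<forall>x. mv_le oplus neg (c 0) (mv_mult oplus neg (c r) (Cl x))
                                       (Cl (mv_mult oplus neg (c r) x)))"
    by (simp add: P.condi_def)
  show ?thesis
  proof (intro conjI iffI impI)
    assume "\<forall>r\<in>rat01. \<forall>x. mv_le oplus neg (c 0) (mv_mult oplus neg (c r) (Cl x)) (Cl (mv_mult oplus neg (c r) x))"
    hence "P.condi" using ci by simp
    thus "\<exists>(G :: 'a set) I. represented_by_context oplus neg (c 0) Cl G I" using P.i_ii by blast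
  next
    assume "\<exists>(G :: 'a set) I. represented_by_context oplus neg (c 0) Cl G I"
    then obtain G :: "'a set" and I where "represented_by_context oplus neg (c 0) Cl G I" by blast
    hence "P.condi" by (rule P.ii_i)
    thus "\<forall>r\<in>rat01. \<forall>x. mv_le oplus neg (c 0) (mv_mult oplus neg (c r) (Cl x)) (Cl (mv_mult oplus neg (c r) x))"
      using ci by simp
  next
    assume "\<exists>(G :: 'g set) I. represented_by_context oplus neg (c 0) Cl G I"
    then obtain G :: "'g set" and I where "represented_by_context oplus neg (c 0) Cl G I" by blast
    hence "P.condi" by (rule P.ii_i)
    thus "\<forall>r\<in>rat01. \<forall>x. mv_le oplus neg (c 0) (mv_mult oplus neg (c r) (Cl x)) (Cl (mv_mult oplus neg (c r) x))"
      using ci by simp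
  qed
qed

end
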